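(* Consider the federated $\beta$-stochastic sign SGD process described in the context, and suppose the bounded-true-gradient and Gaussian-noise assumptions hold. Choose $B=(1+\epsilon_0)B_0$ with $\epsilon_0>\sigma/B_0$, let $0<c<\frac35$, and $c_0=\max\left\{\sqrt{\frac{8\sigma^2}{n}\log\frac6c},\ \sqrt{\frac{8(B+\beta)^2}{p^2}\log\frac{6}{3-5c}}\right\}$. Fix $t\ge1$ and $i\in[d]$. (i) If the adversary is adaptive, or static with $\tau(t)\le\frac{2}{p^2}\log\frac6c$, and $|\nabla F_i(w(t))|\ge\frac{2(B+\beta)}{pM}\tau(t)+\frac{B+\beta}{2\sqrt{2\pi}}e^{-n/2}+\frac{c_0}{\sqrt M}$, then $\Pr\big[\tilde{\boldsymbol g}_i(t)\ne\mathrm{sign}(\nabla F_i(w(t)))\mid w(t)\big]\le\frac{1-c}{2}$. (ii) If the adversary is static with $\tau(t)>\frac{2}{p^2}\log\frac6c$, and $|\nabla F_i(w(t))|\ge\frac{3(B+\beta)\tau(t)}{M}+\frac{B+\beta}{2\sqrt{2\pi}}e^{-n/2}+\frac{c_0}{\sqrt M}$, then $\Pr\big[\tilde{\boldsymbol g}_i(t)\ne\mathrm{sign}(\nabla F_i(w(t)))\mid w(t)\big]\le\frac{1-c}{2}$. In both cases the bound holds regardless of the messages sent by Byzantine clients.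
   Context: Setting: $M$ clients with local functions $f_m:\mathbb{R}^d\to\mathbb{R}$, $F(w)=\frac1M\sum_m f_m(w)$. Parameters: $\beta>0$, $B>0$, mini-batch size $n\ge1$, participation probability $p\in(0,1]$, step size $\eta>0$. $\mathrm{clip}\{g,B\}=\max\{-B,\min\{B,g\}\}$; $\mathrm{sign}(0)=0$. Process: from $w(0)$, in each iteration $t$ a set $\mathcal{S}(t)$ includes each client independently with probability $p$. An adversary chooses Byzantine clients $\mathcal{B}(t)\subseteq[M]$, $\tau(t)=|\mathcal{B}(t)|$; static means chosen independently of $\mathcal{S}(t)$, adaptive means possibly depending on $\mathcal{S}(t)$. Each $m\in\mathcal{S}(t)\setminus\mathcal{B}(t)$ draws $n$ independent stochastic gradients $\boldsymbol g_m^1(t),\dots,\boldsymbol g_m^n(t)$ at $w(t)$ and sends $\hat{\boldsymbol g}_m(t)\in\{-1,1\}^d$ with independent coordinates equal to $1$ with probability $\frac{B+\beta+\mathrm{clip}\{\frac1n\sum_j\boldsymbol g^j_{mi}(t),B\}}{2B+2\beta}$ and $-1$ otherwise; each $m\in\mathcal{S}(t)\cap\mathcal{B}(t)$ sends an arbitrary vector in $\{-1,1\}^d$. The server sets $\tilde{\boldsymbol g}(t)$ to the coordinate-wise sign of the average of received vectors (empty average $=0$), and $w(t+1)=w(t)-\eta\tilde{\boldsymbol g}(t)$. Bounded true gradient: for each $i$ there is $B_i>0$ with $|\nabla f_{mi}(w)|\le B_i$ for all $m,w$; $B_0=\max_iB_i$. Gaussian noise: a stochastic gradient $\boldsymbol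 g_m(w)$ of client $m$ at $w$ is an independent unbiased estimate of $\nabla f_m(w)$ with $\boldsymbol g_{mi}(w)=\nabla f_{mi}(w)+\xi_{mi}$, $\xi_{mi}\sim\mathcal{N}(0,\sigma_{mi}^2)$; $\sigma^2=\max_{m,i}\sigma_{mi}^2$. *)

theory Defs
  imports "HOL-Probability.Probability"
begin

text \<open>One iteration of federated beta-stochastic sign SGD, restricted to one coordinate i,
  started from a given current iterate (i.e. conditioned on w(t)).\<close>

definition clip :: "real \<Rightarrow> real \<Rightarrow> real" where
  "clip g B = max (- B) (min B g)"

definition gauss :: "real \<Rightarrow> real \<Rightarrow> real measure" where
  "gauss mu s = (if s = 0 then return borel mu else density lborel (normal_density mu s))"

text \<open>Probability that an honest client sends +1, given its averaged mini-batch gradient coordinate.\<close>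
definition honest_prob :: "real \<Rightarrow> real \<Rightarrow> real \<Rightarrow> real" where
  "honest_prob B beta x = (B + beta + clip x B) / (2 * B + 2 * beta)"

text \<open>Law of the coordinate message of an honest client (True = +1, False = -1): it draws n independent
  stochastic gradient coordinates  g^j = mu + xi_j, xi_j ~ N(0, s^2), averages them and randomizes.\<close>
definition msg_law :: "nat \<Rightarrow> real \<Rightarrow> real \<Rightarrow> real \<Rightarrow> real \<Rightarrow> bool measure" where
  "msg_law n B beta mu s =
     Giry_Monad.bind (PiM {..<n} (\<lambda>j. gauss mu s))
       (\<lambda>g. measure_pmf (bernoulli_pmf (honest_prob B beta ((\<Sum>j<n. g j) / real n))))"

text \<open>Law of (participation indicator, honest message) of one client; participation ~ Bernoulli(p),
  independent of the gradient sampling.\<close>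
definition client_law :: "real \<Rightarrow> nat \<Rightarrow> real \<Rightarrow> real \<Rightarrow> real \<Rightarrow> real \<Rightarrow> (bool \<times> bool) measure" where
  "client_law p n B beta mu s = measure_pmf (bernoulli_pmf p) \<Otimes>\<^sub>M msg_law n B beta mu s"

definition round_law :: "nat \<Rightarrow> real \<Rightarrow> nat \<Rightarrow> real \<Rightarrow> real \<Rightarrow> (nat \<Rightarrow> real) \<Rightarrow> (nat \<Rightarrow> real)
    \<Rightarrow> (nat \<Rightarrow> bool \<times> bool) measure" where
  "round_law M p n B beta mu s = PiM {..<M} (\<lambda>m. client_law p n B beta (mu m) (s m))"

definition pm :: "bool \<Rightarrow> real" where
  "pm b = (if b then 1 else -1)"

definition part_set :: "nat \<Rightarrow> (nat \<Rightarrow> bool \<times> bool) \<Rightarrow> nat set" where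
  "part_set M \<omega> = {m. m < M \<and> fst (\<omega> m)}"

text \<open>Server output for the coordinate: sign of the average of received messages (empty average = 0).
  Byz maps the participating set to the Byzantine set; bm gives the (arbitrary) Byzantine messages,
  which may depend on the whole outcome.\<close>
definition server_sign :: "nat \<Rightarrow> (nat set \<Rightarrow> nat set) \<Rightarrow> ((nat \<Rightarrow> bool \<times> bool) \<Rightarrow> nat \<Rightarrow> bool)
    \<Rightarrow> (nat \<Rightarrow> bool \<times> bool) \<Rightarrow> real" where
  "server_sign M Byz bm \<omega> =
     (let S = part_set M \<omega> in
      sgn ((\<Sum>m\<in>S. pm (if m \<in> Byz S then bm \<omega> m else snd (\<omega> m))) / real (card S)))"

definition static_adv :: "(nat set \<Rightarrow> nat set) \<Rightarrow> bool" where
  "static_adv Byz = (\<exists>T. \<forall>S. Byz S = T)"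

end

theory Submission
  imports Defs
begin

lemma tail_nn:
  fixes k mu B :: real
  assumes k: "0 < k" and kB: "k \<le> B - mu"
  shows "(\<integral>\<^sup>+x. ennreal (max 0 (x - B) * normal_density mu k x) \<partial>lborel)
          \<le> ennreal (k\<^sup>2 * normal_density mu k B / 2)"
proof -
  define f where "f x = ((x - mu)\<^sup>2 - k\<^sup>2) * normal_density mu k x" for x
  define F where "F x = - k\<^sup>2 * ((x - mu) * normal_density mu k x)" for x
  have Bmu: "B - mu > 0" using k kB by linarith
  have deriv: "DERIV F x :> f x" for x
  proof -
    have e: "DERIV (\<lambda>x. exp (-(x - mu)\<^sup>2 / (2 * k\<^sup>2))) x :> exp (-(x - mu)\<^sup>2 / (2 * k\<^sup>2)) * (- (x - mu) / k\<^sup>2)"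
      using k by (auto intro!: derivative_eq_intros simp: field_simps power2_eq_square)
    have "DERIV (normal_density mu k) x :> 1 / sqrt (2 * pi * k\<^sup>2) * (exp (-(x - mu)\<^sup>2 / (2 * k\<^sup>2)) * (- (x - mu) / k\<^sup>2))"
      unfolding normal_density_def[abs_def] by (intro DERIV_cmult e)
    then have "DERIV (normal_density mu k) x :> (- (x - mu) / k\<^sup>2) * normal_density mu k x"
      by (simp add: normal_density_def mult_ac)
    then have D: "DERIV F x :> - k\<^sup>2 * (1 * normal_density mu k x + (x - mu) * ((- (x - mu) / k\<^sup>2) * normal_density mu k x))"
      unfolding F_def by (intro derivative_eq_intros) auto
    have "- k\<^sup>2 * (1 * normal_density mu k x + (x - mu) * ((- (x - mu) / k\<^sup>2) * normal_density mu k x)) = f x"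
      using k by (simp add: f_def field_simps power2_eq_square)
    with D show ?thesis by simp
  qed
  have fnn: "0 \<le> f x" if "B \<le> x" for x
  proof -
    have "k\<^sup>2 \<le> (x - mu)\<^sup>2" using k kB that by (intro power_mono) auto
    then show ?thesis unfolding f_def by simp
  qed
  have lim: "(F \<longlongrightarrow> 0) at_top"
    unfolding F_def normal_density_def using k
    by real_asymp
  have I: "(\<integral>\<^sup>+x. ennreal (f x) * indicator {B..} x \<partial>lborel) = 0 - F B"
    by (rule nn_integral_FTC_atLeast[OF _ deriv fnn lim]) (auto simp: f_def)
  have "(\<integral>\<^sup>+x. ennreal (max 0 (x - B) * normal_density mu k x) \<partial>lborel)
        \<le> (\<integral>\<^sup>+x. ennreal (f x / (2 * (B - mu))) * indicator {B..} x \<partial>lborel)"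
  proof (rule nn_integral_mono)
    fix x
    show "ennreal (max 0 (x - B) * normal_density mu k x) \<le> ennreal (f x / (2 * (B - mu))) * indicator {B..} x"
    proof (cases "B \<le> x")
      case True
      have "(x - B) * (2 * (B - mu)) \<le> (x - mu)\<^sup>2 - k\<^sup>2"
      proof -
        have "(x - mu)\<^sup>2 - (B - mu)\<^sup>2 = (x - B) * (x + B - 2 * mu)" by (simp add: power2_eq_square algebra_simps)
        moreover have "(x - B) * (2 * (B - mu)) \<le> (x - B) * (x + B - 2 * mu)"
          using True by (intro mult_left_mono) auto
        moreover have "k\<^sup>2 \<le> (B - mu)\<^sup>2" using k kB by (intro power_mono) auto
        ultimately show ?thesis by linarith
      qed
      then have "x - B \<le> ((x - mu)\<^sup>2 - k\<^sup>2) / (2 * (B - mu))" using Bmu by (simp add: field_simps)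
      then have "(x - B) * normal_density mu k x \<le> ((x - mu)\<^sup>2 - k\<^sup>2) / (2 * (B - mu)) * normal_density mu k x"
        by (intro mult_right_mono) auto
      then show ?thesis using True by (auto simp: f_def intro!: ennreal_leI)
    next
      case False then show ?thesis by auto
    qed
  qed
  also have "\<dots> = (\<integral>\<^sup>+x. ennreal (1 / (2 * (B - mu))) * (ennreal (f x) * indicator {B..} x) \<partial>lborel)"
    apply (intro nn_integral_cong)
    using Bmu by (auto simp: ennreal_mult'[symmetric] divide_simps split: split_indicator)
  also have "\<dots> = ennreal (1 / (2 * (B - mu))) * (\<integral>\<^sup>+x. ennreal (f x) * indicator {B..} x \<partial>lborel)"
    by (rule nn_integral_cmult) (auto simp: f_def)
  also have "\<dots> = ennreal (1 / (2 * (B - mu))) * ennreal (- F B)" using I by simp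
  also have "\<dots> = ennreal (1 / (2 * (B - mu)) * (- F B))"
    using Bmu by (simp add: ennreal_mult'[symmetric])
  also have "1 / (2 * (B - mu)) * (- F B) = k\<^sup>2 * normal_density mu k B / 2"
    using Bmu by (simp add: F_def field_simps)
  finally show ?thesis .
qed

lemma tail_real:
  fixes k mu B :: real
  assumes k: "0 < k" and kB: "k \<le> B - mu" and B: "0 \<le> B"
  shows "integrable lborel (\<lambda>x. max 0 (x - B) * normal_density mu k x)"
    and "(\<integral>x. max 0 (x - B) * normal_density mu k x \<partial>lborel) \<le> k\<^sup>2 * normal_density mu k B / 2"
proof -
  have bnd: "norm (max 0 (x - B) * normal_density mu k x) \<le> norm (normal_density mu k x * x)" for x
  proof -
    have "max 0 (x - B) \<le> \<bar>x\<bar>" using B by auto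
    then have "max 0 (x - B) * normal_density mu k x \<le> \<bar>x\<bar> * normal_density mu k x"
      by (intro mult_right_mono) auto
    then show ?thesis
      by (simp add: abs_mult mult.commute)
  qed
  show int: "integrable lborel (\<lambda>x. max 0 (x - B) * normal_density mu k x)"
    by (rule Bochner_Integration.integrable_bound[OF integrable_normal_moment_nz_1[OF k, of mu] _ AE_I2[OF bnd]]) measurable
  have "ennreal (\<integral>x. max 0 (x - B) * normal_density mu k x \<partial>lborel)
       = (\<integral>\<^sup>+x. ennreal (max 0 (x - B) * normal_density mu k x) \<partial>lborel)"
    by (rule nn_integral_eq_integral[symmetric, OF int]) auto
  also have "\<dots> \<le> ennreal (k\<^sup>2 * normal_density mu k B / 2)"
    by (rule tail_nn[OF k kB])
  finally show "(\<integral>x. max 0 (x - B) * normal_density mu k x \<partial>lborel) \<le> k\<^sup>2 * normal_density mu k B / 2"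
    by (subst (asm) ennreal_le_iff) auto
qed

lemma clip_split: "0 \<le> B \<Longrightarrow> clip x B = x - max 0 (x - B) + max 0 (- x - B)"
  unfolding clip_def by auto

lemma normal_density_neg: "normal_density mu k (- x) = normal_density (- mu) k x"
  unfolding normal_density_def by (simp add: power2_eq_square algebra_simps)

lemma clip_bias_normal:
  fixes k mu B :: real
  assumes k: "0 < k" and kB: "k \<le> B - \<bar>mu\<bar>"
  shows "integrable lborel (\<lambda>x. normal_density mu k x * clip x B)"
    and "\<bar>(\<integral>x. normal_density mu k x * clip x B \<partial>lborel) - mu\<bar>
           \<le> k * exp (- (B - \<bar>mu\<bar>)\<^sup>2 / (2 * k\<^sup>2)) / (2 * sqrt (2 * pi))"
proof -
  have B: "0 \<le> B" using k kB by linarith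
  have k1: "k \<le> B - mu" "k \<le> B - (- mu)" using kB by auto
  note u = tail_real[OF k k1(1) B]
  note v0 = tail_real[OF k k1(2) B]
  have eqv: "(\<lambda>x. max 0 (- x - B) * normal_density mu k x) = (\<lambda>x. (\<lambda>y. max 0 (y - B) * normal_density (- mu) k y) (0 + (-1) * x))"
    by (auto simp: normal_density_neg[symmetric] algebra_simps)
  have vint: "integrable lborel (\<lambda>x. max 0 (- x - B) * normal_density mu k x)"
    unfolding eqv by (rule lborel_integrable_real_affine[OF v0(1)]) (use k in simp)
  have vI: "(\<integral>x. max 0 (- x - B) * normal_density mu k x \<partial>lborel) = (\<integral>x. max 0 (x - B) * normal_density (- mu) k x \<partial>lborel)"
    unfolding eqv using lborel_integral_real_affine[of "-1" "\<lambda>y. max 0 (y - B) * normal_density (- mu) k y" 0] by simp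
  have xint: "integrable lborel (\<lambda>x. normal_density mu k x * x)" by (rule integrable_normal_moment_nz_1[OF k])
  have split: "(\<lambda>x. normal_density mu k x * clip x B) = (\<lambda>x. normal_density mu k x * x - max 0 (x - B) * normal_density mu k x + max 0 (- x - B) * normal_density mu k x)"
    using B by (auto simp: clip_split algebra_simps)
  show "integrable lborel (\<lambda>x. normal_density mu k x * clip x B)"
    unfolding split using xint u(1) vint by auto
  have "(\<integral>x. normal_density mu k x * clip x B \<partial>lborel) - mu
        = (\<integral>x. max 0 (- x - B) * normal_density mu k x \<partial>lborel) - (\<integral>x. max 0 (x - B) * normal_density mu k x \<partial>lborel)"
    unfolding split using xint u(1) vint integral_normal_moment_nz_1[OF k, of mu] by simp
  also have "\<dots> = (\<integral>x. max 0 (x - B) * normal_density (- mu) k x \<partial>lborel) - (\<integral>x. max 0 (x - B) * normal_density mu k x \<partial>lborel)"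
    using vI by simp
  finally have eq: "(\<integral>x. normal_density mu k x * clip x B \<partial>lborel) - mu = \<dots>" .
  have nn1: "0 \<le> (\<integral>x. max 0 (x - B) * normal_density (- mu) k x \<partial>lborel)"
    by (intro integral_nonneg_AE) auto
  have nn2: "0 \<le> (\<integral>x. max 0 (x - B) * normal_density mu k x \<partial>lborel)"
    by (intro integral_nonneg_AE) auto
  have dens: "k\<^sup>2 * normal_density m k B / 2 \<le> k * exp (- (B - \<bar>mu\<bar>)\<^sup>2 / (2 * k\<^sup>2)) / (2 * sqrt (2 * pi))"
    if m: "\<bar>m\<bar> = \<bar>mu\<bar>" for m
  proof -
    have "(B - \<bar>mu\<bar>)\<^sup>2 \<le> (B - m)\<^sup>2" using kB k m by (intro power_mono) auto
    then have e: "exp (- (B - m)\<^sup>2 / (2 * k\<^sup>2)) \<le> exp (- (B - \<bar>mu\<bar>)\<^sup>2 / (2 * k\<^sup>2))"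
      using k by (intro exp_mono divide_right_mono) auto
    have s: "sqrt (2 * pi * k\<^sup>2) = k * sqrt (2 * pi)" using k by (simp add: real_sqrt_mult)
    have "k\<^sup>2 * normal_density m k B / 2 = k * exp (- (B - m)\<^sup>2 / (2 * k\<^sup>2)) / (2 * sqrt (2 * pi))"
      unfolding normal_density_def s using k by (simp add: field_simps power2_eq_square)
    also have "\<dots> \<le> k * exp (- (B - \<bar>mu\<bar>)\<^sup>2 / (2 * k\<^sup>2)) / (2 * sqrt (2 * pi))"
      using e k by (intro divide_right_mono mult_left_mono) auto
    finally show ?thesis .
  qed
  show "\<bar>(\<integral>x. normal_density mu k x * clip x B \<partial>lborel) - mu\<bar>
           \<le> k * exp (- (B - \<bar>mu\<bar>)\<^sup>2 / (2 * k\<^sup>2)) / (2 * sqrt (2 * pi))"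
  proof -
    have d1: "k\<^sup>2 * normal_density mu k B / 2 \<le> k * exp (- (B - \<bar>mu\<bar>)\<^sup>2 / (2 * k\<^sup>2)) / (2 * sqrt (2 * pi))"
      by (rule dens) simp
    have d2: "k\<^sup>2 * normal_density (- mu) k B / 2 \<le> k * exp (- (B - \<bar>mu\<bar>)\<^sup>2 / (2 * k\<^sup>2)) / (2 * sqrt (2 * pi))"
      by (rule dens) simp
    show ?thesis unfolding eq abs_le_iff using nn1 nn2 u(2) v0(2) d1 d2 by linarith
  qed
qed

definition avg :: "nat \<Rightarrow> (nat \<Rightarrow> real) \<Rightarrow> real" where
  "avg n g = (\<Sum>j<n. g j) / real n"

lemma clip_bound: "0 \<le> B \<Longrightarrow> \<bar>clip x B\<bar> \<le> B"
  unfolding clip_def by auto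

lemma honest_prob_01:
  assumes "0 < B" "0 < beta"
  shows "0 \<le> honest_prob B beta x" "honest_prob B beta x \<le> 1"
  using clip_bound[of B x] assms unfolding honest_prob_def by (auto simp: field_simps abs_le_iff)

lemma prob_space_gauss: "0 \<le> s \<Longrightarrow> prob_space (gauss mu s)"
  unfolding gauss_def
  by (auto intro: prob_space_return prob_space_normal_density)

lemma sets_gauss[measurable_cong]: "sets (gauss mu s) = sets borel"
  unfolding gauss_def by auto

lemma space_gauss: "space (gauss mu s) = UNIV"
  unfolding gauss_def by auto

lemma measurable_clip[measurable]: "(\<lambda>x. clip x B) \<in> borel_measurable borel"
  unfolding clip_def by measurable

lemma measurable_avg[measurable]:
  "avg n \<in> borel_measurable (PiM {..<n} (\<lambda>j. gauss mu s))"
  unfolding avg_def by measurable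

lemma measurable_honest:
  "(\<lambda>g. honest_prob B beta (avg n g)) \<in> borel_measurable (PiM {..<n} (\<lambda>j. gauss mu s))"
  unfolding honest_prob_def by measurable

lemma kernel_measurable:
  assumes B: "0 < B" "0 < beta"
  shows "(\<lambda>g. measure_pmf (bernoulli_pmf (honest_prob B beta (avg n g))))
           \<in> measurable (PiM {..<n} (\<lambda>j. gauss mu s)) (subprob_algebra (count_space UNIV))"
proof (rule measurable_subprob_algebra)
  fix g show "subprob_space (measure_pmf (bernoulli_pmf (honest_prob B beta (avg n g))))"
    by (rule prob_space_imp_subprob_space) (rule measure_pmf.prob_space_axioms)
next
  fix g show "sets (measure_pmf (bernoulli_pmf (honest_prob B beta (avg n g)))) = sets (count_space UNIV)"
    by simp
next
  fix X :: "bool set" assume "X \<in> sets (count_space UNIV)"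
  have fin: "finite X" by simp
  have eq: "emeasure (measure_pmf (bernoulli_pmf (honest_prob B beta (avg n g)))) X
      = ennreal (\<Sum>b\<in>X. if b then honest_prob B beta (avg n g) else 1 - honest_prob B beta (avg n g))" for g
    unfolding emeasure_measure_pmf_finite[OF fin]
    using honest_prob_01[OF B, of "avg n g"]
    by (auto intro!: sum.cong simp: sum_nonneg)
  show "(\<lambda>g. emeasure (measure_pmf (bernoulli_pmf (honest_prob B beta (avg n g)))) X)
          \<in> borel_measurable (PiM {..<n} (\<lambda>j. gauss mu s))"
    unfolding eq using measurable_honest[of B beta n mu s] by measurable
qed

lemma msg_law_avg: "msg_law n B beta mu s = Giry_Monad.bind (PiM {..<n} (\<lambda>j. gauss mu s))
       (\<lambda>g. measure_pmf (bernoulli_pmf (honest_prob B beta (avg n g))))"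
  unfolding msg_law_def avg_def by simp

lemma msg_law_props:
  fixes n :: nat and mu s B beta :: real
  assumes B: "0 < B" "0 < beta" and s: "0 \<le> s"
  defines "EC \<equiv> (\<integral>g. clip (avg n g) B \<partial>PiM {..<n} (\<lambda>j. gauss mu s))"
  shows "prob_space (msg_law n B beta mu s)"
    and "measure (msg_law n B beta mu s) {True} = (B + beta + EC) / (2 * B + 2 * beta)"
    and "\<bar>EC\<bar> \<le> B"
proof -
  let ?A = "PiM {..<n} (\<lambda>j. gauss mu s)"
  let ?K = "\<lambda>g. measure_pmf (bernoulli_pmf (honest_prob B beta (avg n g)))"
  interpret A: prob_space ?A by (intro prob_space_PiM prob_space_gauss s)
  note K = kernel_measurable[OF B, of n mu s]
  show "prob_space (msg_law n B beta mu s)"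
    unfolding msg_law_avg
    by (rule A.prob_space_bind[OF _ K]) (auto intro: measure_pmf.prob_space_axioms)
  have intc: "integrable ?A (\<lambda>g. clip (avg n g) B)"
    by (rule A.integrable_const_bound[where B=B]) (use B clip_bound in auto)
  show "\<bar>EC\<bar> \<le> B"
  proof -
    have "\<bar>EC\<bar> \<le> (\<integral>g. \<bar>clip (avg n g) B\<bar> \<partial>?A)" unfolding EC_def by (rule integral_abs_bound)
    also have "\<dots> \<le> (\<integral>g. B \<partial>?A)"
      by (rule integral_mono) (use intc B clip_bound in auto)
    finally show ?thesis by (simp add: A.prob_space)
  qed
  have inth: "integrable ?A (\<lambda>g. honest_prob B beta (avg n g))"
    by (rule A.integrable_const_bound[where B=1]) (use honest_prob_01[OF B] measurable_honest in auto)
  have "emeasure (msg_law n B beta mu s) {True} = (\<integral>\<^sup>+g. emeasure (?K g) {True} \<partial>?A)"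
    unfolding msg_law_avg by (rule emeasure_bind[OF A.not_empty K]) simp
  also have "\<dots> = (\<integral>\<^sup>+g. ennreal (honest_prob B beta (avg n g)) \<partial>?A)"
    by (intro nn_integral_cong) (simp add: emeasure_pmf_single honest_prob_01[OF B])
  also have "\<dots> = ennreal (\<integral>g. honest_prob B beta (avg n g) \<partial>?A)"
    by (rule nn_integral_eq_integral[OF inth]) (simp add: honest_prob_01[OF B])
  also have "(\<integral>g. honest_prob B beta (avg n g) \<partial>?A) = (\<integral>g. (B + beta) / (2 * B + 2 * beta) + clip (avg n g) B / (2 * B + 2 * beta) \<partial>?A)"
    by (intro Bochner_Integration.integral_cong) (auto simp: honest_prob_def add_divide_distrib)
  also have "\<dots> = (B + beta + EC) / (2 * B + 2 * beta)"
    using intc unfolding EC_def by (simp add: add_divide_distrib A.prob_space)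
  finally have fin: "emeasure (msg_law n B beta mu s) {True} = ennreal ((B + beta + EC) / (2 * B + 2 * beta))" .
  interpret P: prob_space "msg_law n B beta mu s" by fact
  from fin show "measure (msg_law n B beta mu s) {True} = (B + beta + EC) / (2 * B + 2 * beta)"
    using \<open>\<bar>EC\<bar> \<le> B\<close> B by (simp add: P.emeasure_eq_measure)
qed

lemma indep_vars_PiM_components:
  assumes M: "\<And>i. i \<in> I \<Longrightarrow> prob_space (M i)" and I: "I \<noteq> {}"
  shows "prob_space.indep_vars (PiM I M) M (\<lambda>i \<omega>. \<omega> i) I"
proof -
  interpret P: prob_space "PiM I M" by (rule prob_space_PiM[OF M])
  have eq: "distr (PiM I M) (PiM I M) (\<lambda>x. restrict (\<lambda>i. x i) I) = PiM I (\<lambda>i. distr (PiM I M) (M i) (\<lambda>\<omega>. \<omega> i))"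
  proof -
    have "distr (PiM I M) (PiM I M) (\<lambda>x. restrict (\<lambda>i. x i) I) = distr (PiM I M) (PiM I M) (\<lambda>x. x)"
      by (rule distr_cong) (auto simp: space_PiM PiE_def extensional_restrict)
    also have "\<dots> = PiM I M" by simp
    also have "\<dots> = PiM I (\<lambda>i. distr (PiM I M) (M i) (\<lambda>\<omega>. \<omega> i))"
      by (rule PiM_cong) (use distr_PiM_component[of I M] M in auto)
    finally show ?thesis .
  qed
  show ?thesis
    apply (subst P.indep_vars_iff_distr_eq_PiM'[OF I])
    prefer 2
    apply (auto intro!: measurable_component_singleton eq)
    done
qed

lemma aux_div: "0 < (a::real) \<Longrightarrow> a / (a * a) = 1 / a" by simp

lemma EC_bias:
  fixes n :: nat and mu s B beta :: real
  assumes n: "n \<ge> 1" and s: "0 \<le> s" "s < B - \<bar>mu\<bar>" and beta: "0 < beta"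
  shows "\<bar>(\<integral>g. clip (avg n g) B \<partial>PiM {..<n} (\<lambda>j. gauss mu s)) - mu\<bar>
           \<le> (B + beta) * exp (- real n / 2) / (2 * sqrt (2 * pi))"
proof (cases "s = 0")
  case True
  have Bmu: "\<bar>mu\<bar> \<le> B" using s by linarith
  have "PiM {..<n} (\<lambda>j. gauss mu s) = PiM {..<n} (\<lambda>j. return borel mu)"
    using True by (simp add: gauss_def)
  also have "\<dots> = return (PiM {..<n} (\<lambda>j. borel)) (restrict (\<lambda>j. mu) {..<n})"
    by (rule PiM_return) auto
  finally have eq: "PiM {..<n} (\<lambda>j. gauss mu s) = return (PiM {..<n} (\<lambda>j. borel)) (restrict (\<lambda>j. mu) {..<n})" .
  have "(\<integral>g. clip (avg n g) B \<partial>PiM {..<n} (\<lambda>j. gauss mu s)) = clip (avg n (restrict (\<lambda>j. mu) {..<n})) B"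
    unfolding eq by (rule integral_return) (auto simp: space_PiM avg_def)
  also have "avg n (restrict (\<lambda>j. mu) {..<n}) = mu" using n by (simp add: avg_def)
  also have "clip mu B = mu" using Bmu by (auto simp: clip_def)
  finally have "(\<integral>g. clip (avg n g) B \<partial>PiM {..<n} (\<lambda>j. gauss mu s)) = mu" .
  moreover have "0 \<le> B + beta" using s beta by linarith
  ultimately show ?thesis by simp
next
  case False
  then have s0: "0 < s" using s by simp
  define k where "k = s / sqrt (real n)"
  have "(0::nat) \<in> {..<n}" using n by simp
  then have ne: "{..<n} \<noteq> {}" by blast
  have sqn: "1 \<le> sqrt (real n)" using n by simp
  have k0: "0 < k" using s0 sqn by (simp add: k_def)
  have ks: "k \<le> s" using s0 sqn unfolding k_def by (simp add: divide_le_eq)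
  let ?A = "PiM {..<n} (\<lambda>j. density lborel (normal_density mu s))"
  have Aeq: "PiM {..<n} (\<lambda>j. gauss mu s) = ?A" using False by (simp add: gauss_def)
  interpret A: prob_space ?A by (intro prob_space_PiM prob_space_normal_density s0)
  have ind0: "A.indep_vars (\<lambda>j. density lborel (normal_density mu s)) (\<lambda>i \<omega>. \<omega> i) {..<n}"
    by (rule indep_vars_PiM_components) (use ne s0 prob_space_normal_density in auto)
  have ind: "A.indep_vars (\<lambda>j. borel) (\<lambda>i \<omega>. \<omega> i) {..<n}"
    using A.indep_vars_compose2[OF ind0, of "\<lambda>i x. x" "\<lambda>j. borel"] by simp
  have dist1: "distributed ?A lborel (\<lambda>\<omega>. \<omega> i) (normal_density mu s)" if "i \<in> {..<n}" for i
  proof -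
    have "distr ?A lborel (\<lambda>\<omega>. \<omega> i) = distr ?A (density lborel (normal_density mu s)) (\<lambda>\<omega>. \<omega> i)"
      by (rule distr_cong) auto
    also have "\<dots> = density lborel (normal_density mu s)"
      by (rule distr_PiM_component) (use that s0 prob_space_normal_density in auto)
    finally show ?thesis unfolding distributed_def
      using measurable_component_singleton[OF that, of "\<lambda>j. density lborel (normal_density mu s)"]
      by (auto cong: measurable_cong_sets)
  qed
  have D0: "distributed ?A lborel (\<lambda>x. \<Sum>i<n. x i) (normal_density (\<Sum>i<n. mu) (sqrt (\<Sum>i<n. s\<^sup>2)))"
    by (rule A.sum_indep_normal[OF _ ne ind _ dist1]) (use n s0 in auto)
  have sq: "0 < sqrt (\<Sum>i<n. s\<^sup>2)" using n s0 by simp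
  have D1: "distributed ?A lborel (\<lambda>x. 0 + (1 / real n) * (\<Sum>i<n. x i))
      (normal_density (0 + (1 / real n) * (\<Sum>i<n. mu)) (\<bar>1 / real n\<bar> * sqrt (\<Sum>i<n. s\<^sup>2)))"
    by (rule A.normal_density_affine[OF D0 sq]) (use n in simp)
  have e1: "(\<lambda>x. 0 + (1 / real n) * (\<Sum>i<n. x i)) = avg n" by (auto simp: avg_def)
  have e2: "0 + (1 / real n) * (\<Sum>i<n. mu) = mu" using n by simp
  have e3: "\<bar>1 / real n\<bar> * sqrt (\<Sum>i<n. s\<^sup>2) = k"
  proof -
    have "sqrt (\<Sum>i<n. s\<^sup>2) = sqrt (real n) * s" using s0 by (simp add: real_sqrt_mult)
    moreover have "sqrt (real n) / real n = 1 / sqrt (real n)"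
    proof -
      have h: "real n = sqrt (real n) * sqrt (real n)" by simp
      have "sqrt (real n) / real n = sqrt (real n) / (sqrt (real n) * sqrt (real n))"
        by (simp only: h[symmetric])
      also have "\<dots> = 1 / sqrt (real n)" using sqn aux_div[of "sqrt (real n)"] by linarith
      finally show ?thesis .
    qed
    ultimately show ?thesis unfolding k_def by (simp add: field_simps)
  qed
  have D: "distributed ?A lborel (avg n) (normal_density mu k)"
    using D1 unfolding e1 e2 e3 .
  have I: "(\<integral>x. normal_density mu k x * clip x B \<partial>lborel) = (\<integral>g. clip (avg n g) B \<partial>?A)"
    by (rule distributed_integral[OF D]) auto
  have kB: "k \<le> B - \<bar>mu\<bar>" using ks s by linarith
  have bias: "\<bar>(\<integral>x. normal_density mu k x * clip x B \<partial>lborel) - mu\<bar>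
           \<le> k * exp (- (B - \<bar>mu\<bar>)\<^sup>2 / (2 * k\<^sup>2)) / (2 * sqrt (2 * pi))"
    by (rule clip_bias_normal(2)[OF k0 kB])
  have ex: "exp (- (B - \<bar>mu\<bar>)\<^sup>2 / (2 * k\<^sup>2)) \<le> exp (- real n / 2)"
  proof -
    have "s\<^sup>2 \<le> (B - \<bar>mu\<bar>)\<^sup>2" using s by (intro power_mono) auto
    moreover have "k\<^sup>2 = s\<^sup>2 / real n" unfolding k_def using n by (simp add: power_divide)
    ultimately have "real n * k\<^sup>2 \<le> (B - \<bar>mu\<bar>)\<^sup>2" using n by simp
    then have "real n \<le> (B - \<bar>mu\<bar>)\<^sup>2 / k\<^sup>2" using k0 by (simp add: pos_le_divide_eq)
    then have "real n / 2 \<le> (B - \<bar>mu\<bar>)\<^sup>2 / (2 * k\<^sup>2)"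
    proof -
      have "(B - \<bar>mu\<bar>)\<^sup>2 / (2 * k\<^sup>2) = ((B - \<bar>mu\<bar>)\<^sup>2 / k\<^sup>2) / 2" by simp
      with \<open>real n \<le> (B - \<bar>mu\<bar>)\<^sup>2 / k\<^sup>2\<close> show ?thesis by linarith
    qed
    then show ?thesis by simp
  qed
  have "k * exp (- (B - \<bar>mu\<bar>)\<^sup>2 / (2 * k\<^sup>2)) \<le> (B + beta) * exp (- real n / 2)"
    using ks s beta k0 ex by (intro mult_mono) auto
  then have "k * exp (- (B - \<bar>mu\<bar>)\<^sup>2 / (2 * k\<^sup>2)) / (2 * sqrt (2 * pi)) \<le> (B + beta) * exp (- real n / 2) / (2 * sqrt (2 * pi))"
    by (intro divide_right_mono) auto
  then show ?thesis using bias I Aeq by simp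
qed

lemma sets_msg_law:
  assumes "0 < B" "0 < beta" "0 \<le> s"
  shows "sets (msg_law n B beta mu s) = sets (count_space UNIV)"
proof -
  interpret A: prob_space "PiM {..<n} (\<lambda>j. gauss mu s)" by (intro prob_space_PiM prob_space_gauss assms)
  show ?thesis unfolding msg_law_avg
    by (rule sets_bind) (auto simp: A.not_empty space_gauss)
qed

lemma prob_space_pair_measure:
  assumes "prob_space M1" "prob_space M2"
  shows "prob_space (M1 \<Otimes>\<^sub>M M2)"
proof -
  interpret pair_prob_space M1 M2
    using assms by (simp add: pair_prob_space_def pair_sigma_finite_def prob_space_imp_sigma_finite)
  show ?thesis by (rule P.prob_space_axioms)
qed

lemma client_props:
  fixes p B beta mu s :: real and n :: nat
  assumes p: "0 \<le> p" "p \<le> 1" and B: "0 < B" "0 < beta" and s: "0 \<le> s"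
  defines "q \<equiv> measure (msg_law n B beta mu s) {True}"
  shows "prob_space (client_law p n B beta mu s)"
    and "sets (client_law p n B beta mu s) = sets (count_space UNIV)"
    and "(\<integral>\<omega>. (if fst \<omega> then pm (snd \<omega>) else 0) \<partial>client_law p n B beta mu s) = p * (2 * q - 1)"
    and "(\<integral>\<omega>. (if fst \<omega> then 1 else 0) \<partial>client_law p n B beta mu s) = p"
proof -
  let ?P = "measure_pmf (bernoulli_pmf p)"
  let ?Q = "msg_law n B beta mu s"
  interpret Q: prob_space ?Q by (rule msg_law_props(1)[OF B s])
  interpret pair_prob_space ?P ?Q
    by (simp add: pair_prob_space_def pair_sigma_finite_def prob_space_imp_sigma_finite
        measure_pmf.prob_space_axioms Q.prob_space_axioms)
  show "prob_space (client_law p n B beta mu s)" unfolding client_law_def by (rule P.prob_space_axioms)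
  have sQ: "sets ?Q = sets (count_space UNIV)" by (rule sets_msg_law[OF B s])
  have "sets (client_law p n B beta mu s) = sets (count_space (UNIV::bool set) \<Otimes>\<^sub>M count_space (UNIV::bool set))"
    unfolding client_law_def by (rule sets_pair_measure_cong) (simp_all add: sQ)
  also have "\<dots> = sets (count_space UNIV)" by (subst pair_measure_countable) auto
  finally show sC: "sets (client_law p n B beta mu s) = sets (count_space UNIV)" .
  have meas: "measure (client_law p n B beta mu s) (A \<times> C) = measure ?P A * measure ?Q C" for A C
  proof -
    have "emeasure (client_law p n B beta mu s) (A \<times> C) = emeasure ?P A * emeasure ?Q C"
      unfolding client_law_def by (rule Q.emeasure_pair_measure_Times) (simp_all add: sQ)
    then show ?thesis
      by (simp add: measure_def enn2real_mult)
  qed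
  have PT: "measure ?P {True} = p" using p by (simp add: measure_pmf_single)
  have QF: "measure ?Q {False} = 1 - q"
  proof -
    have "measure ?Q {False} = measure ?Q (space ?Q - {True})"
      using sQ by (intro arg_cong[where f="measure ?Q"]) (auto simp: sets_eq_imp_space_eq[OF sQ])
    also have "\<dots> = 1 - q" unfolding q_def by (rule Q.prob_compl) (simp add: sQ)
    finally show ?thesis .
  qed
  have QU: "measure ?Q UNIV = 1"
    using Q.prob_space sets_eq_imp_space_eq[OF sQ] by simp
  have fin: "emeasure (client_law p n B beta mu s) X \<noteq> \<infinity>" for X
    using prob_space.emeasure_le_1[OF \<open>prob_space (client_law p n B beta mu s)\<close>, of X]
    by (auto simp: top_unique)
  have fin': "emeasure (client_law p n B beta mu s) X < \<infinity>" for X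
    using fin[of X] by (simp add: less_top)
  have "(\<integral>\<omega>. (if fst \<omega> then pm (snd \<omega>) else 0) \<partial>client_law p n B beta mu s)
      = (\<integral>\<omega>. indicator ({True} \<times> {True}) \<omega> - indicator ({True} \<times> {False}) \<omega> \<partial>client_law p n B beta mu s)"
    by (intro Bochner_Integration.integral_cong) (auto simp: pm_def indicator_def)
  also have "\<dots> = measure (client_law p n B beta mu s) ({True} \<times> {True}) - measure (client_law p n B beta mu s) ({True} \<times> {False})"
    using fin' by (subst Bochner_Integration.integral_diff) (auto simp: sC intro!: integrable_real_indicator)
  also have "\<dots> = p * (2 * q - 1)" unfolding meas PT QF q_def[symmetric] by (simp add: algebra_simps)
  finally show "(\<integral>\<omega>. (if fst \<omega> then pm (snd \<omega>) else 0) \<partial>client_law p n B beta mu s) = p * (2 * q - 1)" .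
  have "(\<integral>\<omega>. (if fst \<omega> then 1 else 0) \<partial>client_law p n B beta mu s)
      = (\<integral>\<omega>. indicator ({True} \<times> UNIV) \<omega> \<partial>client_law p n B beta mu s)"
    by (intro Bochner_Integration.integral_cong) (auto simp: indicator_def)
  also have "\<dots> = measure (client_law p n B beta mu s) ({True} \<times> UNIV)"
    using fin by (auto simp: sC)
  also have "\<dots> = p" unfolding meas PT QU by simp
  finally show "(\<integral>\<omega>. (if fst \<omega> then 1 else 0) \<partial>client_law p n B beta mu s) = p" .
qed

lemma hoeff_PiM:
  fixes C :: "nat \<Rightarrow> 'a measure" and phi :: "nat \<Rightarrow> 'a \<Rightarrow> real" and M :: nat and eps :: real
  assumes M: "M \<ge> 1" and C: "\<And>m. m < M \<Longrightarrow> prob_space (C m)"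
    and phim: "\<And>m. m < M \<Longrightarrow> phi m \<in> borel_measurable (C m)"
    and phib: "\<And>m x. m < M \<Longrightarrow> \<bar>phi m x\<bar> \<le> 1" and eps: "eps \<ge> 0"
  shows "measure (PiM {..<M} C) {\<omega> \<in> space (PiM {..<M} C). (\<Sum>m<M. phi m (\<omega> m)) \<le> (\<Sum>m<M. \<integral>x. phi m x \<partial>C m) - eps}
          \<le> exp (- eps\<^sup>2 / (2 * real M))"
proof -
  have C': "\<And>m. m \<in> {..<M} \<Longrightarrow> prob_space (C m)" using C by auto
  interpret P: prob_space "PiM {..<M} C" by (rule prob_space_PiM[OF C'])
  have "(0::nat) \<in> {..<M}" using M by simp
  then have ne: "{..<M} \<noteq> {}" by blast
  have ind0: "P.indep_vars C (\<lambda>i \<omega>. \<omega> i) {..<M}"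
    by (rule indep_vars_PiM_components[OF C' ne])
  have ind: "P.indep_vars (\<lambda>_. borel) (\<lambda>m \<omega>. phi m (\<omega> m)) {..<M}"
    by (rule P.indep_vars_compose2[OF ind0]) (use phim in auto)
  have E: "P.expectation (\<lambda>\<omega>. phi m (\<omega> m)) = (\<integral>x. phi m x \<partial>C m)" if "m < M" for m
  proof -
    have "(\<integral>x. phi m x \<partial>C m) = (\<integral>x. phi m x \<partial>distr (PiM {..<M} C) (C m) (\<lambda>\<omega>. \<omega> m))"
      using distr_PiM_component[of "{..<M}" C m] C' that by simp
    also have "\<dots> = P.expectation (\<lambda>\<omega>. phi m (\<omega> m))"
      by (rule integral_distr) (use that phim in auto)
    finally show ?thesis by simp
  qed
  interpret H: Hoeffding_ineq "PiM {..<M} C" "{..<M}" "\<lambda>m \<omega>. phi m (\<omega> m)" "\<lambda>_. -1" "\<lambda>_. 1"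
     "\<Sum>m<M. P.expectation (\<lambda>\<omega>. phi m (\<omega> m))"
    by unfold_locales (use ind phib in \<open>auto simp: abs_le_iff\<close>)
  have "P.prob {\<omega> \<in> space (PiM {..<M} C). (\<Sum>m<M. phi m (\<omega> m)) \<le> (\<Sum>m<M. P.expectation (\<lambda>\<omega>. phi m (\<omega> m))) - eps}
        \<le> exp (-2 * eps\<^sup>2 / (\<Sum>m<M. (1 - (-1))\<^sup>2))"
    by (rule H.Hoeffding_ineq_le[OF eps]) (use M in simp)
  also have "-2 * eps\<^sup>2 / (\<Sum>m<M. (1 - (-1::real))\<^sup>2) = - eps\<^sup>2 / (2 * real M)" by simp
  also have "(\<Sum>m<M. P.expectation (\<lambda>\<omega>. phi m (\<omega> m))) = (\<Sum>m<M. \<integral>x. phi m x \<partial>C m)"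
    using E by simp
  finally show ?thesis .
qed

lemma hoeff_sub:
  fixes C :: "nat \<Rightarrow> 'a measure" and phi :: "nat \<Rightarrow> 'a \<Rightarrow> real" and M :: nat and eps :: real
  assumes M: "M \<ge> 1" and C: "\<And>m. m < M \<Longrightarrow> prob_space (C m)"
    and phim: "\<And>m. m < M \<Longrightarrow> phi m \<in> borel_measurable (C m)"
    and phib: "\<And>m x. m < M \<Longrightarrow> \<bar>phi m x\<bar> \<le> 1" and eps: "eps \<ge> 0"
    and sub: "A \<subseteq> {\<omega> \<in> space (PiM {..<M} C). (\<Sum>m<M. phi m (\<omega> m)) \<le> (\<Sum>m<M. \<integral>x. phi m x \<partial>C m) - eps}"
  shows "measure (PiM {..<M} C) A \<le> exp (- eps\<^sup>2 / (2 * real M))"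
proof -
  have C': "\<And>m. m \<in> {..<M} \<Longrightarrow> prob_space (C m)" using C by auto
  interpret P: prob_space "PiM {..<M} C" by (rule prob_space_PiM[OF C'])
  have f[measurable]: "(\<lambda>\<omega>. \<Sum>m<M. phi m (\<omega> m)) \<in> borel_measurable (PiM {..<M} C)"
  proof (intro borel_measurable_sum)
    fix m assume "m \<in> {..<M}"
    then show "(\<lambda>\<omega>. phi m (\<omega> m)) \<in> borel_measurable (PiM {..<M} C)"
      using measurable_compose[OF measurable_component_singleton[of m "{..<M}" C] phim[of m]] by auto
  qed
  have "{\<omega> \<in> space (PiM {..<M} C). (\<Sum>m<M. phi m (\<omega> m)) \<le> (\<Sum>m<M. \<integral>x. phi m x \<partial>C m) - eps} \<in> sets (PiM {..<M} C)"
    by measurable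
  then have "measure (PiM {..<M} C) A \<le> measure (PiM {..<M} C) {\<omega> \<in> space (PiM {..<M} C). (\<Sum>m<M. phi m (\<omega> m)) \<le> (\<Sum>m<M. \<integral>x. phi m x \<partial>C m) - eps}"
    by (rule P.finite_measure_mono[OF sub])
  also have "\<dots> \<le> exp (- eps\<^sup>2 / (2 * real M))"
    by (rule hoeff_PiM[OF M C phim phib eps])
  finally show ?thesis .
qed

lemma server_sign_wrong:
  fixes s0 :: real
  assumes s0: "s0 = 1 \<or> s0 = -1"
    and wrong: "server_sign M Byz bm \<omega> \<noteq> s0"
  shows "s0 * (\<Sum>m\<in>part_set M \<omega>. pm (if m \<in> Byz (part_set M \<omega>) then bm \<omega> m else snd (\<omega> m))) \<le> 0"
proof (rule ccontr)
  let ?S = "part_set M \<omega>"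
  let ?R = "\<Sum>m\<in>?S. pm (if m \<in> Byz ?S then bm \<omega> m else snd (\<omega> m))"
  assume "\<not> s0 * ?R \<le> 0"
  then have pos: "s0 * ?R > 0" by simp
  have fin: "finite ?S" unfolding part_set_def by simp
  have "?S \<noteq> {}"
  proof
    assume "?S = {}" then have "?R = 0" by simp
    with pos show False by simp
  qed
  then have c: "card ?S > 0" using fin by (simp add: card_gt_0_iff)
  have "sgn (?R / real (card ?S)) = sgn ?R" using c by (simp add: sgn_divide)
  also have "sgn ?R = s0" using s0 pos by (auto simp: sgn_if zero_less_mult_iff)
  finally have "server_sign M Byz bm \<omega> = s0" unfolding server_sign_def Let_def .
  with wrong show False by simp
qed

lemma pm_bound: "\<bar>pm b\<bar> = 1" unfolding pm_def by auto

lemma sum_part: "(\<Sum>m<M. (if fst (\<omega> m) then f m else (0::real))) = (\<Sum>m\<in>part_set M \<omega>. f m)"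
  unfolding part_set_def by (simp add: sum.inter_filter[symmetric] lessThan_def)

lemma comb_i:
  fixes s0 :: real
  assumes s0: "s0 = 1 \<or> s0 = -1"
    and wrong: "server_sign M Byz bm \<omega> \<noteq> s0"
    and Byz: "\<And>S. Byz S \<subseteq> {..<M}" "\<And>S. card (Byz S) = tau"
  shows "(\<Sum>m<M. s0 * (if fst (\<omega> m) then pm (snd (\<omega> m)) else 0)) \<le> 2 * real tau"
proof -
  let ?S = "part_set M \<omega>"
  let ?D = "Byz ?S"
  have fin: "finite ?S" unfolding part_set_def by simp
  have finD: "finite ?D" using Byz(1) finite_subset by blast
  have R: "s0 * (\<Sum>m\<in>?S. pm (if m \<in> ?D then bm \<omega> m else snd (\<omega> m))) \<le> 0"
    by (rule server_sign_wrong[OF s0 wrong])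
  have "(\<Sum>m<M. s0 * (if fst (\<omega> m) then pm (snd (\<omega> m)) else 0)) = (\<Sum>m\<in>?S. s0 * pm (snd (\<omega> m)))"
    using sum_part[where M=M and \<omega>=\<omega> and f="\<lambda>m. s0 * pm (snd (\<omega> m))"] by (simp add: if_distrib cong: if_cong)
  also have "\<dots> \<le> (\<Sum>m\<in>?S. s0 * pm (if m \<in> ?D then bm \<omega> m else snd (\<omega> m)) + (if m \<in> ?D then 2 else 0))"
  proof (rule sum_mono)
    fix m assume "m \<in> ?S"
    show "s0 * pm (snd (\<omega> m)) \<le> s0 * pm (if m \<in> ?D then bm \<omega> m else snd (\<omega> m)) + (if m \<in> ?D then 2 else 0)"
      using s0 by (auto simp: pm_def)
  qed
  also have "\<dots> = s0 * (\<Sum>m\<in>?S. pm (if m \<in> ?D then bm \<omega> m else snd (\<omega> m))) + (\<Sum>m\<in>?S. (if m \<in> ?D then 2 else 0))"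
    by (simp add: sum.distrib sum_distrib_left)
  also have "(\<Sum>m\<in>?S. (if m \<in> ?D then 2 else 0::real)) = 2 * real (card (?S \<inter> ?D))"
    using fin by (simp add: sum.If_cases)
  also have "card (?S \<inter> ?D) \<le> tau" using card_mono[OF finD, of "?S \<inter> ?D"] Byz(2) by auto
  finally show ?thesis using R by linarith
qed

lemma comb_ii:
  fixes s0 :: real
  assumes s0: "s0 = 1 \<or> s0 = -1"
    and wrong: "server_sign M Byz bm \<omega> \<noteq> s0"
    and T: "\<And>S. Byz S = T"
  shows "(\<Sum>m<M. (if m \<in> T then - (if fst (\<omega> m) then 1 else 0) else s0 * (if fst (\<omega> m) then pm (snd (\<omega> m)) else 0))) \<le> 0"
proof -
  let ?S = "part_set M \<omega>"
  have R: "s0 * (\<Sum>m\<in>?S. pm (if m \<in> Byz ?S then bm \<omega> m else snd (\<omega> m))) \<le> 0"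
    by (rule server_sign_wrong[OF s0 wrong])
  have "(\<Sum>m<M. (if m \<in> T then - (if fst (\<omega> m) then 1 else 0) else s0 * (if fst (\<omega> m) then pm (snd (\<omega> m)) else 0)))
     = (\<Sum>m<M. (if fst (\<omega> m) then (if m \<in> T then -1 else s0 * pm (snd (\<omega> m))) else 0))"
    by (intro sum.cong) auto
  also have "\<dots> = (\<Sum>m\<in>?S. (if m \<in> T then -1 else s0 * pm (snd (\<omega> m))))"
    by (rule sum_part)
  also have "\<dots> \<le> (\<Sum>m\<in>?S. s0 * pm (if m \<in> Byz ?S then bm \<omega> m else snd (\<omega> m)))"
    by (rule sum_mono) (use s0 T in \<open>auto simp: pm_def\<close>)
  also have "\<dots> = s0 * (\<Sum>m\<in>?S. pm (if m \<in> Byz ?S then bm \<omega> m else snd (\<omega> m)))"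
    by (simp add: sum_distrib_left)
  finally show ?thesis using R by linarith
qed

lemma exp_fin:
  fixes p bb c c0 :: real and M :: nat
  assumes p: "p > 0" and bb: "bb > 0" and M: "M \<ge> 1" and c: "0 < c" "c < 3/5"
    and c0: "c0 \<ge> sqrt (8 * bb\<^sup>2 / p\<^sup>2 * ln (6 / (3 - 5 * c)))"
  shows "exp (- (p * sqrt (real M) * c0 / bb)\<^sup>2 / (2 * real M)) \<le> (1 - c) / 2"
proof -
  define L where "L = ln (6 / (3 - 5 * c))"
  have q: "0 < (3 - 5 * c) / 6" "(3 - 5 * c) / 6 < 1" using c by auto
  have L0: "L > 0" unfolding L_def using c by simp
  have X0: "0 \<le> 8 * bb\<^sup>2 / p\<^sup>2 * L" using L0 by simp
  have c00: "0 \<le> c0" using c0 real_sqrt_ge_zero[OF X0[unfolded L_def]] by linarith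
  have "8 * bb\<^sup>2 / p\<^sup>2 * L \<le> c0\<^sup>2"
  proof -
    have "sqrt (8 * bb\<^sup>2 / p\<^sup>2 * L) ^ 2 \<le> c0 ^ 2"
      using c0 X0 unfolding L_def by (intro power_mono) auto
    then show ?thesis using X0 unfolding L_def by simp
  qed
  have sM: "sqrt (real M) ^ 2 = real M" by simp
  have "(p * sqrt (real M) * c0 / bb)\<^sup>2 / (2 * real M) = p\<^sup>2 * c0\<^sup>2 / (2 * bb\<^sup>2)"
  proof -
    have "(p * sqrt (real M) * c0 / bb)\<^sup>2 = p\<^sup>2 * real M * c0\<^sup>2 / bb\<^sup>2"
      by (simp add: power_mult_distrib power_divide)
    moreover have "real M > 0" using M by simp
    ultimately show ?thesis using bb by (simp add: field_simps)
  qed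
  also have "\<dots> \<ge> p\<^sup>2 * (8 * bb\<^sup>2 / p\<^sup>2 * L) / (2 * bb\<^sup>2)"
    using \<open>8 * bb\<^sup>2 / p\<^sup>2 * L \<le> c0\<^sup>2\<close> bb p by (intro divide_right_mono mult_left_mono) auto
  also have "p\<^sup>2 * (8 * bb\<^sup>2 / p\<^sup>2 * L) / (2 * bb\<^sup>2) = 4 * L" using p bb by (simp add: field_simps)
  finally have "- (p * sqrt (real M) * c0 / bb)\<^sup>2 / (2 * real M) \<le> - 4 * L" by simp
  then have "exp (- (p * sqrt (real M) * c0 / bb)\<^sup>2 / (2 * real M)) \<le> exp (- 4 * L)" by simp
  also have "exp (- 4 * L) = exp (- L) ^ 4" by (simp flip: exp_of_nat_mult)
  also have "exp (- L) = (3 - 5 * c) / 6"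
    unfolding L_def using q by (simp add: ln_div exp_diff exp_minus)
  also have "((3 - 5 * c) / 6) ^ 4 \<le> (3 - 5 * c) / 6"
    using power_decreasing[of 1 4 "(3 - 5 * c) / 6"] q by simp
  also have "\<dots> \<le> (1 - c) / 2" using c by simp
  finally show ?thesis .
qed


lemma ar2: "a > 0 \<Longrightarrow> b > 0 \<Longrightarrow> d > 0 \<Longrightarrow> a / b * d * (2 * b / (a * d) * t) = 2 * (t::real)"
  by (simp add: field_simps)

lemma ar3: "a > 0 \<Longrightarrow> b > 0 \<Longrightarrow> d > 0 \<Longrightarrow> a / b * d * (3 * b * t / d) = 3 * a * (t::real)"
  by (simp add: field_simps)

lemma ar4:
  assumes "d > 0" shows "a / b * d * (c / sqrt d) = a * sqrt d * c / (b::real)"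
proof -
  have "a / b * d * (c / sqrt d) = (a * c / b) * (d / sqrt d)" by simp
  also have "d / sqrt d = sqrt d" using real_div_sqrt[of d] assms by simp
  also have "(a * c / b) * sqrt d = a * sqrt d * c / b" by simp
  finally show ?thesis .
qed

theorem corollary1:
  fixes f :: "nat \<Rightarrow> real ^ 'd \<Rightarrow> real"
    and G :: "nat \<Rightarrow> real ^ 'd \<Rightarrow> real ^ 'd"
    and Bb :: "'d \<Rightarrow> real" and sig :: "nat \<Rightarrow> 'd \<Rightarrow> real"
    and M n :: nat and p beta B B0 sigma eps0 c c0 :: real
    and w :: "real ^ 'd" and i :: 'd
    and Byz :: "nat set \<Rightarrow> nat set" and tau :: nat
    and bm :: "(nat \<Rightarrow> bool \<times> bool) \<Rightarrow> nat \<Rightarrow> bool"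
  assumes M_pos: "M \<ge> 1" and n_pos: "n \<ge> 1"
    and p: "0 < p" "p \<le> 1" and beta: "beta > 0"
    and grad: "\<And>m x. m < M \<Longrightarrow> (f m has_derivative (\<lambda>h. G m x \<bullet> h)) (at x)"
    and Bb_pos: "\<And>j. Bb j > 0"
    and bounded: "\<And>m x j. m < M \<Longrightarrow> \<bar>G m x $ j\<bar> \<le> Bb j"
    and B0: "B0 = Max (range Bb)"
    and sig_nn: "\<And>m j. sig m j \<ge> 0"
    and sigma: "sigma = sqrt (Max {(sig m j)\<^sup>2 | m j. m < M})"
    and eps0: "eps0 > sigma / B0" and B: "B = (1 + eps0) * B0"
    and c: "0 < c" "c < 3 / 5"
    and c0: "c0 = max (sqrt (8 * sigma\<^sup>2 / real n * ln (6 / c)))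
                       (sqrt (8 * (B + beta)\<^sup>2 / p\<^sup>2 * ln (6 / (3 - 5 * c))))"
    and Byz: "\<And>S. Byz S \<subseteq> {..<M}" "\<And>S. card (Byz S) = tau"
  defines "gradF \<equiv> (\<Sum>m<M. G m w $ i) / real M"
    and "P \<equiv> measure (round_law M p n B beta (\<lambda>m. G m w $ i) (\<lambda>m. sig m i))
               {\<omega> \<in> space (round_law M p n B beta (\<lambda>m. G m w $ i) (\<lambda>m. sig m i)).
                  server_sign M Byz bm \<omega> \<noteq> sgn ((\<Sum>m<M. G m w $ i) / real M)}"
  shows "(\<bar>gradF\<bar> \<ge> 2 * (B + beta) / (p * real M) * real tau
                  + (B + beta) / (2 * sqrt (2 * pi)) * exp (- real n / 2) + c0 / sqrt (real M)
            \<longrightarrow> P \<le> (1 - c) / 2)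
       \<and> (static_adv Byz \<and> real tau > 2 / p\<^sup>2 * ln (6 / c)
            \<and> \<bar>gradF\<bar> \<ge> 3 * (B + beta) * real tau / real M
                  + (B + beta) / (2 * sqrt (2 * pi)) * exp (- real n / 2) + c0 / sqrt (real M)
            \<longrightarrow> P \<le> (1 - c) / 2)"
proof -
  define mu where "mu m = G m w $ i" for m
  define sg where "sg m = sig m i" for m
  define C where "C m = client_law p n B beta (mu m) (sg m)" for m
  define b' where "b' = (B + beta) * exp (- real n / 2) / (2 * sqrt (2 * pi))"
  define EC where "EC m = (\<integral>g. clip (avg n g) B \<partial>PiM {..<n} (\<lambda>j. gauss (mu m) (sg m)))" for m
  define K where "K = p / (B + beta)"
  define eps where "eps = p * sqrt (real M) * c0 / (B + beta)"
  have RL: "round_law M p n B beta (\<lambda>m. G m w $ i) (\<lambda>m. sig m i) = PiM {..<M} C"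
    unfolding round_law_def C_def mu_def sg_def by simp
  have gF: "gradF = (\<Sum>m<M. mu m) / real M" unfolding gradF_def mu_def by simp
  have Pdef: "P = measure (PiM {..<M} C) {\<omega> \<in> space (PiM {..<M} C). server_sign M Byz bm \<omega> \<noteq> sgn gradF}"
    unfolding P_def RL gF mu_def by simp
  have Mpos: "real M > 0" using M_pos by simp
  have finB: "finite (range Bb)" by simp
  have B0ge: "Bb j \<le> B0" for j unfolding B0 using finB by (intro Max_ge) auto
  have B0pos: "0 < B0" using Bb_pos[of i] B0ge[of i] by linarith
  have mub: "\<bar>mu m\<bar> \<le> B0" if "m < M" for m
    using bounded[OF that, of w i] B0ge[of i] unfolding mu_def by linarith
  define SS where "SS = {(sig m j)\<^sup>2 | m j. m < M}"
  have SSfin: "finite SS"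
  proof -
    have "SS = (\<lambda>(m, j). (sig m j)\<^sup>2) ` ({..<M} \<times> UNIV)" unfolding SS_def by auto
    then show ?thesis by simp
  qed
  have sg0: "0 \<le> sg m" for m using sig_nn unfolding sg_def by simp
  have sgle: "sg m \<le> sigma" if "m < M" for m
  proof -
    have "(sg m)\<^sup>2 \<in> SS" unfolding SS_def sg_def using that by blast
    then have "(sg m)\<^sup>2 \<le> Max SS" using SSfin by simp
    then have "sqrt ((sg m)\<^sup>2) \<le> sqrt (Max SS)" by (rule real_sqrt_le_mono)
    then show ?thesis using sg0[of m] unfolding sigma SS_def by simp
  qed
  have sigB: "sigma < B - B0"
  proof -
    have "sigma < eps0 * B0" using eps0 B0pos by (simp add: pos_divide_less_eq)
    then show ?thesis unfolding B by (simp add: algebra_simps)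
  qed
  have Bpos: "0 < B" using sgle[of 0] sg0[of 0] M_pos sigB B0pos by simp
  have Bb: "0 < B + beta" using Bpos beta by simp
  have sgB: "sg m < B - \<bar>mu m\<bar>" if "m < M" for m using sgle[OF that] sigB mub[OF that] by linarith
  have ECb: "\<bar>EC m - mu m\<bar> \<le> b'" if "m < M" for m
    unfolding EC_def b'_def by (rule EC_bias[OF n_pos sg0 sgB[OF that] beta])
  have b'0: "0 \<le> b'" unfolding b'_def using Bb by simp
  have p01: "0 \<le> p" "p \<le> 1" using p by auto
  have Cprob: "prob_space (C m)" for m unfolding C_def by (rule client_props(1)[OF p01 Bpos beta sg0])
  have Csets: "sets (C m) = sets (count_space UNIV)" for m unfolding C_def by (rule client_props(2)[OF p01 Bpos beta sg0])
  have Cmeas: "f \<in> borel_measurable (C m)" for f :: "bool \<times> bool \<Rightarrow> real" and m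
    unfolding measurable_cong_sets[OF Csets refl] by simp
  have E1: "(\<integral>x. (if fst x then pm (snd x) else 0) \<partial>C m) = K * EC m" for m
  proof -
    have "(\<integral>x. (if fst x then pm (snd x) else 0) \<partial>C m) = p * (2 * measure (msg_law n B beta (mu m) (sg m)) {True} - 1)"
      unfolding C_def by (rule client_props(3)[OF p01 Bpos beta sg0])
    also have "measure (msg_law n B beta (mu m) (sg m)) {True} = (B + beta + EC m) / (2 * B + 2 * beta)"
      unfolding EC_def by (rule msg_law_props(2)[OF Bpos beta sg0])
    finally show ?thesis unfolding K_def using Bb by (simp add: field_simps)
  qed
  have E2: "(\<integral>x. (if fst x then 1 else 0) \<partial>C m) = p" for m
    unfolding C_def by (rule client_props(4)[OF p01 Bpos beta sg0])
  have K0: "0 < K" unfolding K_def using p Bb by simp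
  have L0: "0 < ln (6 / (3 - 5 * c))" using c by simp
  have "0 < sqrt (8 * (B + beta)\<^sup>2 / p\<^sup>2 * ln (6 / (3 - 5 * c)))" using L0 p Bb by simp
  then have c0pos: "0 < c0" unfolding c0 by (rule less_le_trans[OF _ max.cobounded2])
  have eps0': "0 \<le> eps" unfolding eps_def using p Bb c0pos by simp
  have expb: "exp (- eps\<^sup>2 / (2 * real M)) \<le> (1 - c) / 2"
    unfolding eps_def by (rule exp_fin[OF p(1) Bb M_pos c]) (simp add: c0)
  have base: "P \<le> (1 - c) / 2" if H: "\<bar>gradF\<bar> \<ge> X + b' + c0 / sqrt (real M)"
     and Xcase: "(X = 2 * (B + beta) / (p * real M) * real tau) \<or>
                 (X = 3 * (B + beta) * real tau / real M \<and> static_adv Byz)" for X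
  proof -
    have "c0 / sqrt (real M) > 0" using c0pos Mpos by simp
    have X0: "X \<ge> 0" using Xcase p Bb by auto
    have gne: "gradF \<noteq> 0" using H b'0 X0 \<open>c0 / sqrt (real M) > 0\<close> by auto
    define s0 where "s0 = sgn gradF"
    have s0: "s0 = 1 \<or> s0 = -1" using gne unfolding s0_def by (auto simp: sgn_if)
    have s0abs: "\<bar>s0\<bar> = 1" using s0 by auto
    have sumg: "(\<Sum>m<M. s0 * mu m) = real M * \<bar>gradF\<bar>"
    proof -
      have "(\<Sum>m<M. s0 * mu m) = s0 * (\<Sum>m<M. mu m)" by (simp add: sum_distrib_left)
      also have "(\<Sum>m<M. mu m) = real M * gradF" using gF Mpos by simp
      also have "s0 * (real M * gradF) = real M * \<bar>gradF\<bar>" unfolding s0_def by (auto simp: sgn_if)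
      finally show ?thesis .
    qed
    have lowm: "s0 * (K * EC m) \<ge> K * (s0 * mu m - b')" if "m < M" for m
    proof -
      have "s0 * EC m \<ge> s0 * mu m - b'"
        using ECb[OF that] s0 by (auto simp: abs_le_iff)
      then have "K * (s0 * mu m - b') \<le> K * (s0 * EC m)" using K0 by (intro mult_left_mono) auto
      then show ?thesis by (simp add: mult_ac)
    qed
    have KM: "K * (real M * (X + b' + c0 / sqrt (real M)) - real M * b') = K * real M * X + eps"
    proof -
      have "K * (real M * (X + b' + c0 / sqrt (real M)) - real M * b') = K * real M * X + K * real M * (c0 / sqrt (real M))"
        by (simp add: algebra_simps)
      also have "K * real M * (c0 / sqrt (real M)) = eps" unfolding K_def eps_def by (rule ar4[OF Mpos])
      finally show ?thesis .
    qed
    have mainsum: "K * (real M * \<bar>gradF\<bar> - real M * b') \<ge> K * real M * X + eps"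
    proof -
      have "real M * \<bar>gradF\<bar> \<ge> real M * (X + b' + c0 / sqrt (real M))" using H Mpos by simp
      then have "K * (real M * \<bar>gradF\<bar> - real M * b') \<ge> K * (real M * (X + b' + c0 / sqrt (real M)) - real M * b')"
        using K0 by (intro mult_left_mono) auto
      then show ?thesis using KM by simp
    qed
    show ?thesis
    proof (cases "X = 2 * (B + beta) / (p * real M) * real tau")
      case True
      define phi where "phi m x = s0 * (if fst x then pm (snd x) else 0)" for m :: nat and x :: "bool \<times> bool"
      have Ephi: "(\<integral>x. phi m x \<partial>C m) = s0 * (K * EC m)" for m unfolding phi_def E1[symmetric] by simp
      have sumE: "(\<Sum>m<M. \<integral>x. phi m x \<partial>C m) \<ge> K * (real M * \<bar>gradF\<bar> - real M * b')"
      proof -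
        have "(\<Sum>m<M. \<integral>x. phi m x \<partial>C m) \<ge> (\<Sum>m<M. K * (s0 * mu m - b'))"
          unfolding Ephi by (rule sum_mono) (use lowm in auto)
        also have "(\<Sum>m<M. K * (s0 * mu m - b')) = K * (real M * \<bar>gradF\<bar> - real M * b')"
          using sumg by (simp add: sum_distrib_left[symmetric] sum_subtractf)
        finally show ?thesis .
      qed
      have KX: "K * real M * X = 2 * real tau" unfolding True K_def using p Bb Mpos by (intro ar2) auto
      have sub: "{\<omega> \<in> space (PiM {..<M} C). server_sign M Byz bm \<omega> \<noteq> sgn gradF}
          \<subseteq> {\<omega> \<in> space (PiM {..<M} C). (\<Sum>m<M. phi m (\<omega> m)) \<le> (\<Sum>m<M. \<integral>x. phi m x \<partial>C m) - eps}"
      proof safe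
        fix \<omega> assume "server_sign M Byz bm \<omega> \<noteq> sgn gradF"
        then have "(\<Sum>m<M. phi m (\<omega> m)) \<le> 2 * real tau"
          unfolding phi_def using comb_i[OF s0 _ Byz] s0_def by simp
        then show "(\<Sum>m<M. phi m (\<omega> m)) \<le> (\<Sum>m<M. \<integral>x. phi m x \<partial>C m) - eps"
          using sumE mainsum KX by linarith
      qed
      have "P \<le> exp (- eps\<^sup>2 / (2 * real M))"
        unfolding Pdef
        by (rule hoeff_sub[OF M_pos Cprob Cmeas _ eps0' sub]) (use s0 in \<open>auto simp: phi_def pm_def\<close>)
      then show ?thesis using expb by linarith
    next
      case False
      with Xcase have XX: "X = 3 * (B + beta) * real tau / real M" and st: "static_adv Byz" by auto
      obtain T where T: "\<And>S. Byz S = T" using st unfolding static_adv_def by blast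
      have Tsub: "T \<subseteq> {..<M}" and Tc: "card T = tau" using Byz T by metis+
      define psi where "psi m x = (if m \<in> T then - (if fst x then 1 else 0) else s0 * (if fst x then pm (snd x) else 0))"
        for m :: nat and x :: "bool \<times> bool"
      have Epsi: "(\<integral>x. psi m x \<partial>C m) = (if m \<in> T then - p else s0 * (K * EC m))" for m
        by (cases "m \<in> T") (simp_all add: psi_def E1 E2)
      have lowpsi: "(\<integral>x. psi m x \<partial>C m) \<ge> K * (s0 * mu m - b') - (if m \<in> T then 2 * p else 0)" if "m < M" for m
      proof (cases "m \<in> T")
        case True
        have "s0 * mu m - b' \<le> B + beta" using s0 mub[OF that] b'0 sigB sg0[of m] sgle[OF that] beta by (auto simp: abs_le_iff)
        then have "K * (s0 * mu m - b') \<le> K * (B + beta)" using K0 by (intro mult_left_mono) auto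
        also have "K * (B + beta) = p" unfolding K_def using Bb by simp
        finally show ?thesis unfolding Epsi using True by simp
      next
        case False then show ?thesis unfolding Epsi using lowm[OF that] by simp
      qed
      have sumE: "(\<Sum>m<M. \<integral>x. psi m x \<partial>C m) \<ge> K * (real M * \<bar>gradF\<bar> - real M * b') - 2 * p * real tau"
      proof -
        have "(\<Sum>m<M. \<integral>x. psi m x \<partial>C m) \<ge> (\<Sum>m<M. K * (s0 * mu m - b') - (if m \<in> T then 2 * p else 0))"
          by (rule sum_mono) (use lowpsi in auto)
        also have "(\<Sum>m<M. K * (s0 * mu m - b') - (if m \<in> T then 2 * p else 0))
            = K * (real M * \<bar>gradF\<bar> - real M * b') - (\<Sum>m<M. (if m \<in> T then 2 * p else 0))"
          using sumg by (simp add: sum_distrib_left[symmetric] sum_subtractf)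
        also have "(\<Sum>m<M. (if m \<in> T then 2 * p else 0)) = 2 * p * real tau"
        proof -
          have "{..<M} \<inter> T = T" using Tsub by blast
          then show ?thesis using Tc by (simp add: sum.If_cases)
        qed
        finally show ?thesis .
      qed
      have KX: "K * real M * X = 3 * p * real tau" unfolding XX K_def using p Bb Mpos by (intro ar3) auto
      have sub: "{\<omega> \<in> space (PiM {..<M} C). server_sign M Byz bm \<omega> \<noteq> sgn gradF}
          \<subseteq> {\<omega> \<in> space (PiM {..<M} C). (\<Sum>m<M. psi m (\<omega> m)) \<le> (\<Sum>m<M. \<integral>x. psi m x \<partial>C m) - eps}"
      proof safe
        fix \<omega> assume "server_sign M Byz bm \<omega> \<noteq> sgn gradF"
        then have "(\<Sum>m<M. psi m (\<omega> m)) \<le> 0"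
          unfolding psi_def using comb_ii[OF s0 _ T] s0_def by simp
        moreover have "0 \<le> p * real tau" using p by simp
        ultimately show "(\<Sum>m<M. psi m (\<omega> m)) \<le> (\<Sum>m<M. \<integral>x. psi m x \<partial>C m) - eps"
          using sumE mainsum KX by linarith
      qed
      have "P \<le> exp (- eps\<^sup>2 / (2 * real M))"
        unfolding Pdef
        by (rule hoeff_sub[OF M_pos Cprob Cmeas _ eps0' sub]) (use s0 in \<open>auto simp: psi_def pm_def\<close>)
      then show ?thesis using expb by linarith
    qed
  qed
  show ?thesis
  proof (intro conjI impI)
    assume "\<bar>gradF\<bar> \<ge> 2 * (B + beta) / (p * real M) * real tau
                  + (B + beta) / (2 * sqrt (2 * pi)) * exp (- real n / 2) + c0 / sqrt (real M)"
    then show "P \<le> (1 - c) / 2"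
      by (intro base[of "2 * (B + beta) / (p * real M) * real tau"]) (simp_all add: b'_def)
  next
    assume "static_adv Byz \<and> real tau > 2 / p\<^sup>2 * ln (6 / c)
            \<and> \<bar>gradF\<bar> \<ge> 3 * (B + beta) * real tau / real M
                  + (B + beta) / (2 * sqrt (2 * pi)) * exp (- real n / 2) + c0 / sqrt (real M)"
    then show "P \<le> (1 - c) / 2"
      by (intro base[of "3 * (B + beta) * real tau / real M"]) (simp_all add: b'_def)
  qed
qed

end
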